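(* Let $\Gamma \leq F_d$ be a finitely generated subgroup. Let $g \in F_d$ be an admissible connector for $\mathrm{C}(\Gamma)$ with itself, and let $J$ be the length of the join segment of $g$. Let $\Gamma' := \langle \Gamma, g\Gamma g^{-1}\rangle$. Then for every $R \in \mathbb N$, \[ c_{\Gamma'}(R) \leq \sum_{i=0}^{\lfloor R/(2J) \rfloor} \ \sum_{\substack{\alpha=(\alpha_0,\dots,\alpha_{2i}) \in \mathbb N^{2i+1} \\ \sum_j \alpha_j = R + 2i(|g| - 2J)}} \ \prod_{j=0}^{2i} c_\Gamma(\alpha_j). \]
   Context: $F_d$ is free on $a_1,\dots,a_d$; $|g|$ is the reduced word length, and for $H\le F_d$, $c_H(R) = |\{h\in H \mid |h|\le R\}|$. The Schreier graph $\mathrm{Sch}(H) = H\backslash\mathcal T$ of $H\le F_d$ is the quotient of the directed, $\{a_1,\dots,a_d\}$-labeled Cayley tree $\mathcal T$ of $F_d$, rooted at the image $v_1$ of $1$; a reduced word $b_1\cdots b_k$ (with $b_j\in\{a_i^{\pm1}\}$) defines the path from the root following edges with these labels (traversing an $a_i$-edge backwards for $a_i^{-1}$). The core graph $\mathrm{C}(H)$ is the minimal connected subgraph of $\mathrm{Sch}(H)$ containing the root and all cycles (without backtracking) based at the root. For $g=b_1\cdots b_k$ reduced and finite core graphs $\mathfrak g_1=\mathfrak g_2=\mathrm{C}(\Gamma)$: let $k_1$ be the largest $i\in\{0,\dots,k\}$ such that the path from the root of $\mathfrak g_1$ reading $b_1\cdots b_i$ exists inside $\mathfrak g_1$, and $k_2$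 the largest $i$ such that the path from the root of $\mathfrak g_2$ reading $b_k^{-1}b_{k-1}^{-1}\cdots b_{k-i+1}^{-1}$ exists inside $\mathfrak g_2$. The element $g$ is an admissible connector for $\mathfrak g_1$ with $\mathfrak g_2$ if $k_1+k_2<k$; then the initial segment is $b_1\cdots b_{k_1}$, the terminal segment is (the inverse of) $b_{k-k_2+1}\cdots b_k$, and the join segment is the remaining middle subword $b_{k_1+1}\cdots b_{k-k_2}$, of length $J = k-k_1-k_2$. *)

theory Defs
  imports Main
begin

text \<open>Free group F_d realised as reduced words. A letter (i, False) stands for a_i,
  (i, True) for a_i^-1.\<close>

type_synonym letter = "nat \<times> bool"

definition inv_letter :: "letter \<Rightarrow> letter" where
  "inv_letter x = (fst x, \<not> snd x)"

definition reduced :: "letter list \<Rightarrow> bool" where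
  "reduced w \<longleftrightarrow> (\<forall>j. Suc j < length w \<longrightarrow> w ! Suc j \<noteq> inv_letter (w ! j))"

definition free_group :: "nat \<Rightarrow> letter list set" where
  "free_group d = {w. (\<forall>x\<in>set w. fst x < d) \<and> reduced w}"

primrec red :: "letter list \<Rightarrow> letter list" where
  "red [] = []"
| "red (x # xs) = (case red xs of [] \<Rightarrow> [x]
                    | y # ys \<Rightarrow> (if y = inv_letter x then ys else x # y # ys))"

definition fmult :: "letter list \<Rightarrow> letter list \<Rightarrow> letter list" where
  "fmult u v = red (u @ v)"

definition finv :: "letter list \<Rightarrow> letter list" where
  "finv w = rev (map inv_letter w)"

definition is_subgroup :: "nat \<Rightarrow> letter list set \<Rightarrow> bool" where
  "is_subgroup d H \<longleftrightarrow> H \<subseteq> free_group d \<and> [] \<in> H \<and>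
     (\<forall>u\<in>H. \<forall>v\<in>H. fmult u v \<in> H) \<and> (\<forall>u\<in>H. finv u \<in> H)"

definition generated :: "nat \<Rightarrow> letter list set \<Rightarrow> letter list set" where
  "generated d S = \<Inter>{H. is_subgroup d H \<and> S \<subseteq> H}"

definition fin_gen_subgroup :: "nat \<Rightarrow> letter list set \<Rightarrow> bool" where
  "fin_gen_subgroup d H \<longleftrightarrow> (\<exists>S. finite S \<and> S \<subseteq> free_group d \<and> H = generated d S)"

definition growth :: "letter list set \<Rightarrow> nat \<Rightarrow> nat" where
  "growth H R = card {h\<in>H. length h \<le> R}"

text \<open>Schreier graph Sch(H): vertices are right cosets H w, edges are pairs
  (vertex v, generator index i), the a_i-edge from v to v a_i.\<close>
definition rcoset :: "letter list set \<Rightarrow> letter list \<Rightarrow> letter list set" where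
  "rcoset H w = {fmult h w | h. h \<in> H}"

text \<open>The (undirected) edge traversed at step j of the path from the root reading w.\<close>
definition step_edge :: "letter list set \<Rightarrow> letter list \<Rightarrow> nat \<Rightarrow> letter list set \<times> nat" where
  "step_edge H w j =
     (if snd (w ! j) then (rcoset H (take (Suc j) w), fst (w ! j))
      else (rcoset H (take j w), fst (w ! j)))"

definition path_edges :: "letter list set \<Rightarrow> letter list \<Rightarrow> (letter list set \<times> nat) set" where
  "path_edges H w = {step_edge H w j | j. j < length w}"

text \<open>Core graph C(H): union of all cycles without backtracking based at the root,
  i.e. of the closed paths at the root reading the reduced words h in H.\<close>
definition core_edges :: "letter list set \<Rightarrow> (letter list set \<times> nat) set" where
  "core_edges H = (\<Union>h\<in>H. path_edges H h)"

definition reads_in_core :: "letter list set \<Rightarrow> letter list \<Rightarrow> bool" where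
  "reads_in_core H w \<longleftrightarrow> path_edges H w \<subseteq> core_edges H"

definition k1 :: "letter list set \<Rightarrow> letter list \<Rightarrow> nat" where
  "k1 H g = (GREATEST i. i \<le> length g \<and> reads_in_core H (take i g))"

definition k2 :: "letter list set \<Rightarrow> letter list \<Rightarrow> nat" where
  "k2 H g = (GREATEST i. i \<le> length g \<and> reads_in_core H (take i (finv g)))"

definition admissible_connector :: "letter list set \<Rightarrow> letter list \<Rightarrow> bool" where
  "admissible_connector H g \<longleftrightarrow> k1 H g + k2 H g < length g"

definition join_length :: "letter list set \<Rightarrow> letter list \<Rightarrow> nat" where
  "join_length H g = length g - k1 H g - k2 H g"

end

theory Submission
  imports Defs
begin

definition cn :: "letter \<Rightarrow> letter list \<Rightarrow> letter list" where
  "cn x w = (case w of [] \<Rightarrow> [x] | y # ys \<Rightarrow> (if y = inv_letter x then ys else x # y # ys))"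

lemma red_Cons: "red (x # xs) = cn x (red xs)"
  by (simp add: cn_def)

declare red.simps(2)[simp del]

lemma inv_inv[simp]: "inv_letter (inv_letter x) = x"
  by (simp add: inv_letter_def)

lemma inv_neq[simp]: "inv_letter x \<noteq> x" "x \<noteq> inv_letter x"
  by (auto simp: inv_letter_def prod_eq_iff)

lemma inv_eq_iff[simp]: "inv_letter x = inv_letter y \<longleftrightarrow> x = y"
  by (metis inv_inv)

lemma fst_inv[simp]: "fst (inv_letter x) = fst x"
  by (simp add: inv_letter_def)

lemma reduced_Nil[simp]: "reduced []" by (simp add: reduced_def)
lemma reduced_single[simp]: "reduced [x]" by (simp add: reduced_def)

lemma reduced_Cons: "reduced (x # xs) \<longleftrightarrow> reduced xs \<and> (xs \<noteq> [] \<longrightarrow> hd xs \<noteq> inv_letter x)"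
  apply (cases xs)
   apply simp
  apply (auto simp: reduced_def nth_Cons split: nat.splits)
  done

lemma reduced_red: "reduced (red w)"
proof (induction w)
  case Nil then show ?case by simp
next
  case (Cons x xs)
  then show ?case
    by (auto simp: red_Cons cn_def reduced_Cons split: list.splits)
qed

lemma cn_red: "reduced (x # xs) \<Longrightarrow> cn x xs = x # xs"
  by (auto simp: cn_def reduced_Cons split: list.splits)

lemma red_reduced: "reduced w \<Longrightarrow> red w = w"
proof (induction w)
  case Nil then show ?case by simp
next
  case (Cons x xs)
  then have "reduced xs" by (simp add: reduced_Cons)
  with Cons show ?case by (simp add: red_Cons cn_red)
qed

lemma red_red[simp]: "red (red w) = red w"
  by (simp add: red_reduced reduced_red)

lemma red_append_foldr: "red (xs @ ys) = foldr cn xs (red ys)"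
  by (induction xs) (auto simp: red_Cons)

lemma red_append_right: "red (xs @ ys) = red (xs @ red ys)"
  by (simp add: red_append_foldr)

lemma cn_inv: "reduced v \<Longrightarrow> cn x (cn (inv_letter x) v) = v"
  by (cases v) (auto simp: cn_def reduced_Cons split: list.splits)

lemma red_cn_append: "reduced w \<Longrightarrow> red (cn x w @ ys) = cn x (red (w @ ys))"
proof (cases w)
  case Nil then show ?thesis by (simp add: cn_def red_Cons)
next
  case (Cons y w')
  assume rw: "reduced w"
  show ?thesis
  proof (cases "y = inv_letter x")
    case True
    have "reduced (red (w' @ ys))" by (rule reduced_red)
    then have "cn x (cn (inv_letter x) (red (w' @ ys))) = red (w' @ ys)" by (rule cn_inv)
    then show ?thesis using Cons True by (simp add: cn_def red_Cons)
  next
    case False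
    then show ?thesis using Cons by (simp add: cn_def red_Cons)
  qed
qed

lemma red_append_left: "red (red xs @ ys) = red (xs @ ys)"
proof (induction xs)
  case Nil then show ?case by simp
next
  case (Cons x xs)
  have "red (red (x # xs) @ ys) = red (cn x (red xs) @ ys)" by (simp add: red_Cons)
  also have "\<dots> = cn x (red (red xs @ ys))" by (rule red_cn_append[OF reduced_red])
  also have "\<dots> = cn x (red (xs @ ys))" using Cons by simp
  also have "\<dots> = red ((x # xs) @ ys)" by (simp add: red_Cons)
  finally show ?case .
qed

lemma red_mid: "red (xs @ ys @ zs) = red (xs @ red ys @ zs)"
  by (metis red_append_left red_append_right)

lemma red_append_right': "red (xs @ red ys) = red (xs @ ys)"
  by (simp add: red_append_right[symmetric])

lemma length_cn: "length (cn x w) \<le> Suc (length w)"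
  by (auto simp: cn_def split: list.splits)

lemma length_red: "length (red w) \<le> length w"
proof (induction w)
  case Nil then show ?case by simp
next
  case (Cons x xs) then show ?case using length_cn[of x "red xs"] by (simp add: red_Cons)
qed

lemma set_cn: "set (cn x w) \<subseteq> insert x (set w)"
  by (auto simp: cn_def split: list.splits)

lemma set_red: "set (red w) \<subseteq> set w"
proof (induction w)
  case Nil then show ?case by simp
next
  case (Cons x xs) then show ?case using set_cn[of x "red xs"] by (auto simp: red_Cons)
qed

lemma finv_append[simp]: "finv (xs @ ys) = finv ys @ finv xs"
  by (simp add: finv_def)
lemma finv_finv[simp]: "finv (finv w) = w"
  by (simp add: finv_def rev_map comp_def)
lemma finv_Nil[simp]: "finv [] = []" by (simp add: finv_def)
lemma finv_Cons: "finv (x # xs) = finv xs @ [inv_letter x]" by (simp add: finv_def)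
lemma length_finv[simp]: "length (finv w) = length w" by (simp add: finv_def)
lemma finv_eq_Nil[simp]: "finv w = [] \<longleftrightarrow> w = []" by (simp add: finv_def)
lemma hd_finv: "w \<noteq> [] \<Longrightarrow> hd (finv w) = inv_letter (last w)"
  by (simp add: finv_def hd_rev last_map)
lemma last_finv: "w \<noteq> [] \<Longrightarrow> last (finv w) = inv_letter (hd w)"
  by (simp add: finv_def last_rev hd_map)
lemma set_finv: "set (finv w) = inv_letter ` set w" by (simp add: finv_def)

lemma reduced_append: "reduced (a @ b) \<longleftrightarrow> reduced a \<and> reduced b \<and> (a \<noteq> [] \<and> b \<noteq> [] \<longrightarrow> hd b \<noteq> inv_letter (last a))"
proof (induction a)
  case Nil then show ?case by simp
next
  case (Cons x a)
  then show ?case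
    by (cases a) (auto simp: reduced_Cons)
qed

lemma reduced_snoc: "reduced (a @ [y]) \<longleftrightarrow> reduced a \<and> (a \<noteq> [] \<longrightarrow> y \<noteq> inv_letter (last a))"
  by (simp add: reduced_append)

lemma reduced_finv: "reduced w \<Longrightarrow> reduced (finv w)"
proof (induction w)
  case Nil then show ?case by simp
next
  case (Cons x xs)
  then have "reduced xs" by (simp add: reduced_Cons)
  with Cons show ?case
    by (auto simp: finv_Cons reduced_snoc last_finv reduced_Cons)
qed

lemma reduced_finv_iff[simp]: "reduced (finv w) \<longleftrightarrow> reduced w"
  by (metis finv_finv reduced_finv)

lemma red_snoc: "reduced u \<Longrightarrow> red (u @ [y]) = (if u \<noteq> [] \<and> last u = inv_letter y then butlast u else u @ [y])"
proof (induction u)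
  case Nil then show ?case by (simp add: red_Cons cn_def)
next
  case (Cons a u)
  then have ru: "reduced u" and h: "u \<noteq> [] \<Longrightarrow> hd u \<noteq> inv_letter a" by (auto simp: reduced_Cons)
  show ?case
  proof (cases "u = []")
    case True then show ?thesis by (auto simp: red_Cons cn_def)
  next
    case False
    show ?thesis
    proof (cases "last u = inv_letter y")
      case True
      then have "red (u @ [y]) = butlast u" using Cons.IH ru False by simp
      then show ?thesis using False True h
        by (cases u rule: rev_cases) (auto simp: red_Cons cn_def split: list.splits)
    next
      case F2: False
      then have "red (u @ [y]) = u @ [y]" using Cons.IH ru False by simp
      then show ?thesis using False F2 h
        by (cases u) (auto simp: red_Cons cn_def split: list.splits)
    qed
  qed
qed

lemma butlast_finv: "butlast (finv v) = finv (tl v)"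
  by (cases v) (auto simp: finv_Cons)

lemma red_finv: "red (finv w) = finv (red w)"
proof (induction w)
  case Nil then show ?case by simp
next
  case (Cons x xs)
  have "red (finv (x # xs)) = red (red (finv xs) @ [inv_letter x])"
    by (simp add: finv_Cons red_append_left)
  also have "\<dots> = red (finv (red xs) @ [inv_letter x])" using Cons by simp
  also have "\<dots> = finv (red (x # xs))"
  proof -
    have rv: "reduced (red xs)" by (rule reduced_red)
    show ?thesis
    proof (cases "red xs")
      case Nil then show ?thesis by (simp add: red_Cons cn_def red_reduced finv_Cons)
    next
      case (Cons y v)
      have "reduced (finv (red xs))" using rv by simp
      then have e: "red (finv (red xs) @ [inv_letter x]) = (if last (finv (red xs)) = x then butlast (finv (red xs)) else finv (red xs) @ [inv_letter x])"
        using red_snoc[of "finv (red xs)" "inv_letter x"] Cons by simp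
      show ?thesis
      proof (cases "y = inv_letter x")
        case True then show ?thesis using e Cons by (simp add: red_Cons cn_def last_finv butlast_finv)
      next
        case False
        then have "inv_letter y \<noteq> x" by auto
        then show ?thesis using e Cons False by (simp add: red_Cons cn_def last_finv finv_Cons)
      qed
    qed
  qed
  finally show ?case .
qed

lemma red_inv_pair: "red (inv_letter x # x # zs) = red zs"
  using cn_inv[OF reduced_red, of "inv_letter x" zs] by (simp add: red_Cons)

lemma red_cancel: "red (finv u @ u @ ys) = red ys"
proof (induction u)
  case Nil then show ?case by simp
next
  case (Cons x u)
  have "red (finv (x # u) @ (x # u) @ ys) = red (finv u @ (inv_letter x # x # (u @ ys)))"
    by (simp add: finv_Cons)
  also have "\<dots> = red (finv u @ red (inv_letter x # x # (u @ ys)))" by (rule red_append_right)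
  also have "\<dots> = red (finv u @ red (u @ ys))" by (simp add: red_inv_pair)
  also have "\<dots> = red (finv u @ u @ ys)" by (simp add: red_append_right')
  finally show ?case using Cons by simp
qed

lemma red_cancel2: "red (u @ finv u @ ys) = red ys"
  using red_cancel[of "finv u" ys] by simp

lemma red_cancel_end: "red (xs @ u @ finv u) = red xs"
  by (metis append.right_neutral red_append_right red_cancel2)

lemma red_cancel_end': "red (xs @ finv u @ u) = red xs"
  using red_cancel_end[of xs "finv u"] by simp

lemma reduced_take: "reduced w \<Longrightarrow> reduced (take n w)"
  by (metis append_take_drop_id reduced_append)

lemma reduced_drop: "reduced w \<Longrightarrow> reduced (drop n w)"
  by (metis append_take_drop_id reduced_append)

lemma RC: "reduced a \<Longrightarrow> reduced b \<Longrightarrow> \<exists>m. m \<le> length a \<and> m \<le> length b \<and>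
   red (a @ b) = take (length a - m) a @ drop m b \<and> (0 < m \<longrightarrow> last a = inv_letter (hd b))"
proof (induction a)
  case Nil then show ?case by (auto simp: red_reduced)
next
  case (Cons x a)
  then have ra: "reduced a" and h: "a \<noteq> [] \<Longrightarrow> hd a \<noteq> inv_letter x" by (auto simp: reduced_Cons)
  obtain m where m: "m \<le> length a" "m \<le> length b" "red (a @ b) = take (length a - m) a @ drop m b"
    "0 < m \<longrightarrow> last a = inv_letter (hd b)"
    using Cons.IH[OF ra Cons.prems(2)] by blast
  show ?case
  proof (cases "m < length a")
    case True
    then have "take (length a - m) a \<noteq> []" by auto
    moreover have "hd (take (length a - m) a) = hd a" using True by (simp add: hd_take)
    ultimately obtain z zs where zz: "take (length a - m) a = z # zs" "z = hd a"
      by (cases "take (length a - m) a") auto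
    then have "red ((x # a) @ b) = x # take (length a - m) a @ drop m b"
      using m(3) h True by (cases "a = []") (auto simp: red_Cons cn_def)
    then show ?thesis using m True
      by (intro exI[of _ m]) (auto simp: Suc_diff_le)
  next
    case False
    then have mq: "m = length a" using m(1) by simp
    have r: "red ((x # a) @ b) = cn x (drop m b)" using m(3) mq by (simp add: red_Cons)
    show ?thesis
    proof (cases "drop m b \<noteq> [] \<and> hd (drop m b) = inv_letter x")
      case True
      then have "cn x (drop m b) = drop (Suc m) b"
        by (cases "drop m b") (auto simp: cn_def drop_Suc drop_tl)
      moreover have "Suc m \<le> length b" using True by simp
      moreover have "last (x # a) = inv_letter (hd b)"
      proof (cases "a = []")
        case T2: True then show ?thesis using mq True by simp
      next
        case False then show ?thesis using m(4) mq by simp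
      qed
      ultimately show ?thesis using r mq by (intro exI[of _ "Suc m"]) auto
    next
      case False
      then have "cn x (drop m b) = x # drop m b"
        by (cases "drop m b") (auto simp: cn_def)
      then show ?thesis using r mq m
        by (intro exI[of _ m]) (auto simp: reduced_Cons)
    qed
  qed
qed

lemma reduced_concat_rep: "reduced c \<Longrightarrow> c \<noteq> [] \<Longrightarrow> last c \<noteq> inv_letter (hd c) \<Longrightarrow>
   reduced (concat (replicate n c))"
proof (induction n)
  case 0 then show ?case by simp
next
  case (Suc n)
  then show ?case
    by (cases n) (auto simp: reduced_append)
qed

lemma length_concat_rep: "length (concat (replicate n c)) = n * length c"
  by (induction n) auto

lemma take_concat_rep: "0 < n \<Longrightarrow> c \<noteq> [] \<Longrightarrow> take 1 (concat (replicate n c)) = [hd c]"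
  by (cases n; cases c) auto

lemma sub_reduced: "is_subgroup d H \<Longrightarrow> h \<in> H \<Longrightarrow> reduced h"
  by (auto simp: is_subgroup_def free_group_def)

lemma sub_red: "is_subgroup d H \<Longrightarrow> h \<in> H \<Longrightarrow> red h = h"
  by (simp add: sub_reduced red_reduced)

lemma sub_nil: "is_subgroup d H \<Longrightarrow> [] \<in> H"
  by (simp add: is_subgroup_def)

lemma sub_mult: "is_subgroup d H \<Longrightarrow> a \<in> H \<Longrightarrow> b \<in> H \<Longrightarrow> red (a @ b) \<in> H"
  by (auto simp: is_subgroup_def fmult_def)

lemma sub_inv: "is_subgroup d H \<Longrightarrow> a \<in> H \<Longrightarrow> finv a \<in> H"
  by (auto simp: is_subgroup_def)

lemma rcoset_red: "rcoset H (red w) = rcoset H w"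
  by (simp add: rcoset_def fmult_def red_append_right')

lemma rcoset_mult: assumes sg: "is_subgroup d H" and gH: "\<gamma> \<in> H"
  shows "rcoset H (\<gamma> @ w) = rcoset H w"
proof
  show "rcoset H (\<gamma> @ w) \<subseteq> rcoset H w"
  proof
    fix z assume "z \<in> rcoset H (\<gamma> @ w)"
    then obtain h where h: "h \<in> H" "z = red (h @ \<gamma> @ w)" by (auto simp: rcoset_def fmult_def)
    then have "z = red (red (h @ \<gamma>) @ w)" by (simp add: red_append_left)
    moreover have "red (h @ \<gamma>) \<in> H" using sub_mult[OF sg h(1) gH] .
    ultimately show "z \<in> rcoset H w" by (auto simp: rcoset_def fmult_def)
  qed
next
  show "rcoset H w \<subseteq> rcoset H (\<gamma> @ w)"
  proof
    fix z assume "z \<in> rcoset H w"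
    then obtain h where h: "h \<in> H" "z = red (h @ w)" by (auto simp: rcoset_def fmult_def)
    have "red (red (h @ finv \<gamma>) @ \<gamma> @ w) = red (h @ finv \<gamma> @ \<gamma> @ w)"
      by (simp add: red_append_left)
    also have "\<dots> = red (h @ red (finv \<gamma> @ \<gamma> @ w))" by (simp add: red_append_right')
    also have "\<dots> = red (h @ w)" by (simp add: red_cancel red_append_right')
    finally have "z = red (red (h @ finv \<gamma>) @ \<gamma> @ w)" using h by simp
    moreover have "red (h @ finv \<gamma>) \<in> H" using sub_mult[OF sg h(1) sub_inv[OF sg gH]] .
    ultimately show "z \<in> rcoset H (\<gamma> @ w)" by (auto simp: rcoset_def fmult_def)
  qed
qed

lemma se_take: "j < m \<Longrightarrow> step_edge H (take m w) j = step_edge H w j"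
  by (simp add: step_edge_def min_def)

lemma se_eq: "take (Suc j) w = take (Suc j) w' \<Longrightarrow> step_edge H w j = step_edge H w' j"
  by (metis lessI se_take)

lemma se_in_path: "j < length w \<Longrightarrow> step_edge H w j \<in> path_edges H w"
  by (auto simp: path_edges_def)

lemma se_in_core: "h \<in> H \<Longrightarrow> j < length h \<Longrightarrow> step_edge H h j \<in> core_edges H"
  by (auto simp: core_edges_def path_edges_def)

lemma path_edges_take_Suc: "k < length w \<Longrightarrow>
  path_edges H (take (Suc k) w) \<subseteq> path_edges H (take k w) \<union> {step_edge H w k}"
proof
  fix e assume k: "k < length w" and "e \<in> path_edges H (take (Suc k) w)"
  then obtain j where j: "j < Suc k" "e = step_edge H (take (Suc k) w) j"
    by (auto simp: path_edges_def)
  then have e: "e = step_edge H w j" by (simp add: se_take)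
  show "e \<in> path_edges H (take k w) \<union> {step_edge H w k}"
  proof (cases "j < k")
    case True
    then have "e = step_edge H (take k w) j" using e by (simp add: se_take)
    then show ?thesis using True k by (auto simp: path_edges_def)
  next
    case False then have "j = k" using j by simp
    then show ?thesis using e by simp
  qed
qed

lemma k1_props:
  shows "k1 H g \<le> length g" and "reads_in_core H (take (k1 H g) g)"
    and "k1 H g < length g \<Longrightarrow> step_edge H g (k1 H g) \<notin> core_edges H"
proof -
  let ?P = "\<lambda>i. i \<le> length g \<and> reads_in_core H (take i g)"
  have P0: "?P 0" by (simp add: reads_in_core_def path_edges_def)
  have bd: "\<forall>y. ?P y \<longrightarrow> y \<le> length g" by simp
  have Pk: "?P (k1 H g)" unfolding k1_def by (rule GreatestI_nat[of ?P 0 "length g"]) (use P0 in auto)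
  then show "k1 H g \<le> length g" and "reads_in_core H (take (k1 H g) g)" by auto
  assume lt: "k1 H g < length g"
  show "step_edge H g (k1 H g) \<notin> core_edges H"
  proof
    assume inC: "step_edge H g (k1 H g) \<in> core_edges H"
    have "?P (Suc (k1 H g))"
      using lt Pk inC path_edges_take_Suc[OF lt, of H]
      by (auto simp: reads_in_core_def)
    then have "Suc (k1 H g) \<le> k1 H g" unfolding k1_def by (rule Greatest_le_nat[of ?P _ "length g"]) simp
    then show False by simp
  qed
qed

lemma red_app3': "red (xs @ ys @ red zs) = red (xs @ ys @ zs)"
  using red_append_right'[of "xs @ ys" zs] by simp

lemma red_conj_back: "red (p @ red (finv p @ \<gamma> @ p) @ finv p) = red \<gamma>"
proof -
  have "red (p @ red (finv p @ \<gamma> @ p) @ finv p) = red (p @ (finv p @ \<gamma> @ p) @ finv p)"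
    by (rule red_mid[symmetric])
  also have "\<dots> = red (\<gamma> @ p @ finv p)" using red_cancel2[of p "\<gamma> @ p @ finv p"] by simp
  also have "\<dots> = red \<gamma>" by (rule red_cancel_end)
  finally show ?thesis .
qed

lemma pow_in:
  assumes sg: "is_subgroup d H" and c: "red (p @ c @ finv p) \<in> H"
  shows "red (p @ concat (replicate n c) @ finv p) \<in> H"
proof (induction n)
  case 0 then show ?case using red_cancel2[of p "[]"] sub_nil[OF sg] by simp
next
  case (Suc n)
  let ?C = "concat (replicate n c)"
  have "red (p @ concat (replicate (Suc n) c) @ finv p) = red (p @ c @ (?C @ finv p))" by simp
  also have "\<dots> = red (p @ c @ red (?C @ finv p))" by (simp only: red_app3')
  also have "\<dots> = red (p @ c @ red (finv p @ p @ ?C @ finv p))" by (simp only: red_cancel)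
  also have "\<dots> = red ((p @ c @ finv p) @ (p @ ?C @ finv p))" by (simp only: red_app3' append_assoc)
  also have "\<dots> = red (red (p @ c @ finv p) @ red (p @ ?C @ finv p))"
    by (simp only: red_append_left red_append_right')
  finally show ?case using sub_mult[OF sg c Suc] by simp
qed

lemma factA:
  assumes sg: "is_subgroup d H" and rg: "reduced g" and lt: "k1 H g < length g"
    and gH: "\<gamma> \<in> H" and cne: "red (finv (take (k1 H g) g) @ \<gamma> @ take (k1 H g) g) \<noteq> []"
  shows "hd (red (finv (take (k1 H g) g) @ \<gamma> @ take (k1 H g) g)) \<noteq> g ! k1 H g"
proof
  define k where "k = k1 H g"
  define p where "p = take k g"
  define x where "x = g ! k"
  define c where "c = red (finv p @ \<gamma> @ p)"
  assume hx: "hd (red (finv (take (k1 H g) g) @ \<gamma> @ take (k1 H g) g)) = g ! k1 H g"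
  then have hc: "hd c = x" and cn: "c \<noteq> []" using cne by (auto simp: c_def p_def x_def k_def)
  have lp: "length p = k" using lt by (simp add: p_def k_def)
  have tk: "take (Suc k) g = p @ [x]" using lt by (simp add: p_def x_def k_def take_Suc_conv_app_nth)
  have rpx: "reduced (p @ [x])" using reduced_take[OF rg, of "Suc k"] tk by simp
  then have rp: "reduced p" and lpx: "p \<noteq> [] \<Longrightarrow> x \<noteq> inv_letter (last p)" by (auto simp: reduced_snoc)
  have rc: "reduced c" by (simp add: c_def reduced_red)
  have cg: "red (p @ c @ finv p) = \<gamma>" using red_conj_back[of p \<gamma>] sub_red[OF sg gH] by (simp add: c_def)
  have notin: "step_edge H g k \<notin> core_edges H" using k1_props(3)[OF lt] by (simp add: k_def)
  show False
  proof (cases "last c = inv_letter x")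
    case True
    have "reduced (p @ c @ finv p)"
      using rp rc cn hc True lpx by (auto simp: reduced_append hd_finv)
    then have "p @ c @ finv p = \<gamma>" using cg by (simp add: red_reduced)
    moreover have "take (Suc k) (p @ c @ finv p) = p @ [x]" using lp cn hc
      by (cases c) auto
    moreover have "k < length (p @ c @ finv p)" using lp cn by simp
    ultimately have "step_edge H g k \<in> core_edges H"
      using se_eq[of k g "p @ c @ finv p" H] tk se_in_core[OF gH] by metis
    then show False using notin by simp
  next
    case False
    define n where "n = Suc k"
    define C where "C = concat (replicate n c)"
    have rC: "reduced C" using reduced_concat_rep[OF rc cn] False hc by (simp add: C_def)
    have lC: "length C = n * length c" by (simp add: C_def length_concat_rep)
    have t1: "take 1 C = [x]" using take_concat_rep[OF _ cn, of n] hc by (simp add: C_def n_def)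
    have hC: "C \<noteq> [] \<and> hd C = x" using t1 by (cases C) auto
    have rpC: "reduced (p @ C)" using rp rC hC lpx by (auto simp: reduced_append)
    have inH: "red (p @ C @ finv p) \<in> H" using pow_in[OF sg, of p c n] cg gH by (simp add: C_def)
    obtain m where m: "m \<le> length (p @ C)" "m \<le> length (finv p)"
      "red ((p @ C) @ finv p) = take (length (p @ C) - m) (p @ C) @ drop m (finv p)"
      using RC[OF rpC reduced_finv[OF rp]] by blast
    have "length c \<ge> 1" using cn by (cases c) auto
    then have "n * length c \<ge> n" by simp
    then have big: "length (p @ C) - m \<ge> Suc k" using lC m(2) lp
      by (simp add: n_def)
    have "take (Suc k) (red (p @ C @ finv p)) = take (Suc k) (take (length (p @ C) - m) (p @ C) @ drop m (finv p))"
      using m(3) by simp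
    also have "\<dots> = take (Suc k) (take (length (p @ C) - m) (p @ C))"
      using big by (simp add: take_append)
    also have "\<dots> = take (Suc k) (p @ C)" using big by (simp add: min_def)
    also have "\<dots> = p @ [x]" using lp t1 by simp
    finally have tw: "take (Suc k) (red (p @ C @ finv p)) = take (Suc k) g" using tk by simp
    have "k < length (red (p @ C @ finv p))" using m(3) big by simp
    then have "step_edge H g k \<in> core_edges H"
      using se_eq[OF tw, of H] se_in_core[OF inH] by metis
    then show False using notin by simp
  qed
qed

lemma factB:
  assumes sg: "is_subgroup d H" and rg: "reduced g" and lt: "k1 H g < length g"
    and gH: "\<gamma> \<in> H" and cne: "red (\<gamma> @ take (k1 H g) g) \<noteq> []"
  shows "last (red (\<gamma> @ take (k1 H g) g)) \<noteq> inv_letter (g ! k1 H g)"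
proof
  define k where "k = k1 H g"
  define p where "p = take k g"
  define x where "x = g ! k"
  define c where "c = red (\<gamma> @ p)"
  assume "last (red (\<gamma> @ take (k1 H g) g)) = inv_letter (g ! k1 H g)"
  then have lc: "last c = inv_letter x" and cn: "c \<noteq> []" using cne by (auto simp: c_def p_def x_def k_def)
  have lp: "length p = k" using lt by (simp add: p_def k_def)
  have tk: "take (Suc k) g = p @ [x]" using lt by (simp add: p_def x_def k_def take_Suc_conv_app_nth)
  have rpx: "reduced (p @ [x])" using reduced_take[OF rg, of "Suc k"] tk by simp
  then have rp: "reduced p" and lpx: "p \<noteq> [] \<Longrightarrow> x \<noteq> inv_letter (last p)" by (auto simp: reduced_snoc)
  have rc: "reduced c" by (simp add: c_def reduced_red)
  have notin: "step_edge H g k \<notin> core_edges H" using k1_props(3)[OF lt] by (simp add: k_def)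
  obtain m where m: "m \<le> length c" "m \<le> length (finv p)"
      "red (c @ finv p) = take (length c - m) c @ drop m (finv p)"
      "0 < m \<longrightarrow> last c = inv_letter (hd (finv p))"
    using RC[OF rc reduced_finv[OF rp]] by blast
  have m0: "m = 0"
  proof (rule ccontr)
    assume "m \<noteq> 0"
    then have pn: "p \<noteq> []" and "last c = inv_letter (hd (finv p))" using m by auto
    then have "last p = inv_letter x" using lc by (simp add: hd_finv)
    then show False using lpx[OF pn] by auto
  qed
  have "red (c @ finv p) = red (\<gamma> @ p @ finv p)" by (simp add: c_def red_append_left)
  also have "\<dots> = \<gamma>" using red_cancel_end[of \<gamma> p] sub_red[OF sg gH] by simp
  finally have W: "c @ finv p = \<gamma>" using m(3) m0 by simp
  define k' where "k' = length c - 1"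
  have kl: "k' < length (c @ finv p)" using cn by (cases c) (auto simp: k'_def)
  have Wk: "(c @ finv p) ! k' = inv_letter x" using cn lc by (simp add: k'_def nth_append last_conv_nth)
  have tW1: "take (Suc k') (c @ finv p) = c" using cn by (simp add: k'_def)
  have tW0: "take k' (c @ finv p) = butlast c" using cn by (simp add: k'_def butlast_conv_take)
  have rcp: "rcoset H c = rcoset H p" by (simp add: c_def rcoset_red rcoset_mult[OF sg gH])
  have bl: "butlast c = red (c @ [x])"
  proof -
    have ce: "c = butlast c @ [inv_letter x]" using cn lc by (metis append_butlast_last_id)
    have "red (c @ [x]) = red (butlast c @ [inv_letter x] @ finv [inv_letter x])"
      by (subst ce) (simp add: finv_def)
    also have "\<dots> = red (butlast c)" by (rule red_cancel_end)
    also have "\<dots> = butlast c" using reduced_take[OF rc] by (simp add: butlast_conv_take red_reduced)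
    finally show ?thesis by simp
  qed
  have rcb: "rcoset H (butlast c) = rcoset H (p @ [x])"
  proof -
    have "rcoset H (butlast c) = rcoset H (c @ [x])" by (simp add: bl rcoset_red)
    also have "\<dots> = rcoset H (red (c @ [x]))" by (simp add: rcoset_red)
    also have "\<dots> = rcoset H (red (\<gamma> @ p @ [x]))" by (simp add: c_def red_append_left)
    also have "\<dots> = rcoset H (p @ [x])" by (simp add: rcoset_red rcoset_mult[OF sg gH])
    finally show ?thesis .
  qed
  obtain i b where xib: "x = (i, b)" by (cases x)
  have "step_edge H (c @ finv p) k' = step_edge H g k"
    using Wk tW1 tW0 rcp rcb tk xib lt
    by (auto simp: step_edge_def inv_letter_def x_def p_def k_def)
  moreover have "step_edge H (c @ finv p) k' \<in> core_edges H"
    using se_in_core[of "c @ finv p" H k'] W gH kl by simp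
  ultimately show False using notin by simp
qed

lemma finv_conj: "finv (red (finv p @ a @ p)) = red (finv p @ finv a @ p)"
  by (simp add: red_finv[symmetric])

lemma factA2:
  assumes sg: "is_subgroup d H" and rg: "reduced g" and lt: "k1 H g < length g"
    and gH: "\<gamma> \<in> H" and cne: "red (finv (take (k1 H g) g) @ \<gamma> @ take (k1 H g) g) \<noteq> []"
  shows "last (red (finv (take (k1 H g) g) @ \<gamma> @ take (k1 H g) g)) \<noteq> inv_letter (g ! k1 H g)"
proof -
  let ?p = "take (k1 H g) g"
  let ?c = "red (finv ?p @ \<gamma> @ ?p)"
  have ne: "red (finv ?p @ finv \<gamma> @ ?p) \<noteq> []" using cne finv_conj[of ?p \<gamma>] by (metis finv_eq_Nil)
  have "hd (finv ?c) \<noteq> g ! k1 H g"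
    using factA[OF sg rg lt sub_inv[OF sg gH] ne] by (simp add: finv_conj)
  then show ?thesis using cne by (auto simp: hd_finv)
qed

lemma factB2:
  assumes sg: "is_subgroup d H" and rg: "reduced g" and lt: "k1 H g < length g"
    and gH: "\<gamma> \<in> H" and cne: "red (finv (take (k1 H g) g) @ \<gamma>) \<noteq> []"
  shows "hd (red (finv (take (k1 H g) g) @ \<gamma>)) \<noteq> g ! k1 H g"
proof -
  let ?p = "take (k1 H g) g"
  have e: "finv (red (finv ?p @ \<gamma>)) = red (finv \<gamma> @ ?p)" by (simp add: red_finv[symmetric])
  have ne: "red (finv \<gamma> @ ?p) \<noteq> []" using cne e by (metis finv_eq_Nil)
  have "last (finv (red (finv ?p @ \<gamma>))) \<noteq> inv_letter (g ! k1 H g)"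
    using factB[OF sg rg lt sub_inv[OF sg gH] ne] e by simp
  then show ?thesis using cne by (auto simp: last_finv)
qed

lemma conj_ne: "is_subgroup d H \<Longrightarrow> a \<in> H \<Longrightarrow> a \<noteq> [] \<Longrightarrow> red (finv p @ a @ p) \<noteq> []"
  using red_conj_back[of p a] red_cancel2[of p "[]"] sub_red[of d H a] by auto

lemma conj_len: "is_subgroup d H \<Longrightarrow> a \<in> H \<Longrightarrow> length a \<le> length (red (finv p @ a @ p)) + 2 * length p"
proof -
  assume sg: "is_subgroup d H" and aH: "a \<in> H"
  have "a = red (p @ red (finv p @ a @ p) @ finv p)" using red_conj_back[of p a] sub_red[OF sg aH] by simp
  also have "length \<dots> \<le> length (p @ red (finv p @ a @ p) @ finv p)" by (rule length_red)
  finally show ?thesis by simp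
qed

lemma right_len: "is_subgroup d H \<Longrightarrow> a \<in> H \<Longrightarrow> length a \<le> length (red (a @ p)) + length p"
proof -
  assume sg: "is_subgroup d H" and aH: "a \<in> H"
  have "red (red (a @ p) @ finv p) = red a" by (simp add: red_append_left red_cancel_end)
  then have "a = red (red (a @ p) @ finv p)" using sub_red[OF sg aH] by simp
  also have "length \<dots> \<le> length (red (a @ p) @ finv p)" by (rule length_red)
  finally show ?thesis by simp
qed

lemma left_len: "is_subgroup d H \<Longrightarrow> a \<in> H \<Longrightarrow> length a \<le> length (red (finv p @ a)) + length p"
proof -
  assume sg: "is_subgroup d H" and aH: "a \<in> H"
  have "red (p @ red (finv p @ a)) = red a" by (simp add: red_append_right' red_cancel2)
  then have "a = red (p @ red (finv p @ a))" using sub_red[OF sg aH] by simp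
  also have "length \<dots> \<le> length (p @ red (finv p @ a))" by (rule length_red)
  finally show ?thesis by simp
qed

definition Wd :: "letter list \<Rightarrow> letter list \<Rightarrow> (letter list \<times> letter list) list \<Rightarrow> letter list" where
  "Wd g a ps = a @ concat (map (\<lambda>(b, c). g @ b @ finv g @ c) ps)"

lemma Wd_Nil[simp]: "Wd g a [] = a" by (simp add: Wd_def)
lemma Wd_Cons: "Wd g a ((b, c) # ps) = a @ g @ b @ finv g @ Wd g c ps" by (simp add: Wd_def)

definition inHs :: "letter list set \<Rightarrow> letter list \<Rightarrow> (letter list \<times> letter list) list \<Rightarrow> bool" where
  "inHs H a ps \<longleftrightarrow> a \<in> H \<and> (\<forall>bc\<in>set ps. fst bc \<in> H \<and> snd bc \<in> H)"

lemma inHs_Nil[simp]: "inHs H a [] \<longleftrightarrow> a \<in> H" by (simp add: inHs_def)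
lemma inHs_Cons[simp]: "inHs H a ((b, c) # ps) \<longleftrightarrow> a \<in> H \<and> b \<in> H \<and> inHs H c ps"
  by (auto simp: inHs_def)

definition Tset :: "letter list set \<Rightarrow> letter list \<Rightarrow> letter list set" where
  "Tset H g = {red (Wd g a ps) | a ps. inHs H a ps}"

lemma red_app4: "red (xs @ red ys) = red (xs @ ys)" by (rule red_append_right')

lemma T_mult:
  assumes sg: "is_subgroup d H"
  shows "inHs H a ps \<Longrightarrow> inHs H b qs \<Longrightarrow> \<exists>c rs. inHs H c rs \<and> red (Wd g a ps @ Wd g b qs) = red (Wd g c rs)"
proof (induction ps arbitrary: a)
  case Nil
  have "red (Wd g a [] @ Wd g b qs) = red (Wd g (red (a @ b)) qs)"
    by (simp add: Wd_def red_append_left)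
  moreover have "inHs H (red (a @ b)) qs" using Nil sub_mult[OF sg] by (cases qs) (auto simp: inHs_def)
  ultimately show ?case by blast
next
  case (Cons bc ps)
  obtain u v where bc: "bc = (u, v)" by (cases bc)
  have hv: "inHs H v ps" and ha: "a \<in> H" "u \<in> H" using Cons.prems bc by auto
  obtain c rs where crs: "inHs H c rs" "red (Wd g v ps @ Wd g b qs) = red (Wd g c rs)"
    using Cons.IH[OF hv Cons.prems(2)] by blast
  have "red (Wd g a (bc # ps) @ Wd g b qs) = red ((a @ g @ u @ finv g) @ (Wd g v ps @ Wd g b qs))"
    by (simp add: bc Wd_Cons)
  also have "\<dots> = red ((a @ g @ u @ finv g) @ red (Wd g c rs))" by (simp only: red_app4 crs(2)[symmetric])
  also have "\<dots> = red (Wd g a ((u, c) # rs))" by (simp only: red_app4) (simp add: Wd_Cons)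
  finally show ?case using crs(1) ha by (intro exI[of _ a] exI[of _ "(u, c) # rs"]) simp
qed

lemma T_inv:
  assumes sg: "is_subgroup d H"
  shows "inHs H a ps \<Longrightarrow> \<exists>c rs. inHs H c rs \<and> red (finv (Wd g a ps)) = red (Wd g c rs)"
proof (induction ps arbitrary: a)
  case Nil then show ?case using sub_inv[OF sg] by (intro exI[of _ "finv a"] exI[of _ "[]"]) auto
next
  case (Cons bc ps)
  obtain u v where bc: "bc = (u, v)" by (cases bc)
  have hv: "inHs H v ps" and ha: "a \<in> H" "u \<in> H" using Cons.prems bc by auto
  obtain c rs where crs: "inHs H c rs" "red (finv (Wd g v ps)) = red (Wd g c rs)"
    using Cons.IH[OF hv] by blast
  have y: "inHs H [] [(finv u, finv a)]" using ha sub_inv[OF sg] sub_nil[OF sg] by simp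
  obtain c2 rs2 where c2: "inHs H c2 rs2" "red (Wd g c rs @ Wd g [] [(finv u, finv a)]) = red (Wd g c2 rs2)"
    using T_mult[OF sg crs(1) y] by blast
  have "red (finv (Wd g a (bc # ps))) = red (finv (Wd g v ps) @ Wd g [] [(finv u, finv a)])"
    by (simp add: bc Wd_Cons)
  also have "\<dots> = red (red (finv (Wd g v ps)) @ Wd g [] [(finv u, finv a)])" by (simp only: red_append_left)
  also have "\<dots> = red (Wd g c rs @ Wd g [] [(finv u, finv a)])" by (simp only: crs(2) red_append_left)
  finally show ?case using c2 by auto
qed

lemma Wd_letters:
  "(\<forall>x\<in>set g. fst x < d) \<Longrightarrow> inHs H a ps \<Longrightarrow> H \<subseteq> free_group d \<Longrightarrow> \<forall>x\<in>set (Wd g a ps). fst x < d"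
proof (induction ps arbitrary: a)
  case Nil then show ?case by (auto simp: free_group_def)
next
  case (Cons bc ps)
  obtain u v where bc: "bc = (u, v)" by (cases bc)
  have "\<forall>x\<in>set (Wd g v ps). fst x < d" using Cons bc by auto
  moreover have "a \<in> H" "u \<in> H" using Cons.prems bc by auto
  ultimately show ?case using Cons.prems(1,3) bc by (auto simp: Wd_Cons set_finv free_group_def)
qed

lemma T_subgroup:
  assumes sg: "is_subgroup d H" and gF: "g \<in> free_group d"
  shows "is_subgroup d (Tset H g)"
  unfolding is_subgroup_def
proof (intro conjI ballI)
  show "Tset H g \<subseteq> free_group d"
  proof
    fix t assume "t \<in> Tset H g"
    then obtain a ps where t: "t = red (Wd g a ps)" "inHs H a ps" by (auto simp: Tset_def)
    have "\<forall>x\<in>set (Wd g a ps). fst x < d"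
      using Wd_letters[OF _ t(2)] gF sg by (auto simp: free_group_def is_subgroup_def)
    then show "t \<in> free_group d" using t set_red[of "Wd g a ps"] reduced_red
      by (auto simp: free_group_def)
  qed
  show "[] \<in> Tset H g" unfolding Tset_def
    using sub_nil[OF sg] by (intro CollectI exI[of _ "[]"]) auto
next
  fix u v assume "u \<in> Tset H g" "v \<in> Tset H g"
  then obtain a ps b qs where uv: "u = red (Wd g a ps)" "inHs H a ps" "v = red (Wd g b qs)" "inHs H b qs"
    by (auto simp: Tset_def)
  obtain c rs where c: "inHs H c rs" "red (Wd g a ps @ Wd g b qs) = red (Wd g c rs)"
    using T_mult[OF sg uv(2,4)] by blast
  have "fmult u v = red (Wd g c rs)" using c(2) uv by (simp add: fmult_def red_append_left red_app4)
  then show "fmult u v \<in> Tset H g" using c(1) by (auto simp: Tset_def)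
next
  fix u assume "u \<in> Tset H g"
  then obtain a ps where uv: "u = red (Wd g a ps)" "inHs H a ps" by (auto simp: Tset_def)
  obtain c rs where c: "inHs H c rs" "red (finv (Wd g a ps)) = red (Wd g c rs)"
    using T_inv[OF sg uv(2)] by blast
  have "finv u = red (Wd g c rs)" using c(2) uv by (simp add: red_finv)
  then show "finv u \<in> Tset H g" using c(1) by (auto simp: Tset_def)
qed

lemma gen_sub_T:
  assumes sg: "is_subgroup d H" and gF: "g \<in> free_group d"
  shows "generated d (H \<union> {fmult (fmult g h) (finv g) | h. h \<in> H}) \<subseteq> Tset H g"
proof -
  have "H \<subseteq> Tset H g"
  proof
    fix h assume "h \<in> H"
    then show "h \<in> Tset H g" using sub_red[OF sg] unfolding Tset_def
      by (intro CollectI exI[of _ h] exI[of _ "[]"]) auto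
  qed
  moreover have "{fmult (fmult g h) (finv g) | h. h \<in> H} \<subseteq> Tset H g"
  proof
    fix z assume "z \<in> {fmult (fmult g h) (finv g) | h. h \<in> H}"
    then obtain h where h: "h \<in> H" "z = fmult (fmult g h) (finv g)" by auto
    have "z = red (Wd g [] [(h, [])])" using h(2) by (simp add: fmult_def red_append_left Wd_Cons)
    then show "z \<in> Tset H g" using h(1) sub_nil[OF sg] unfolding Tset_def
      by (intro CollectI exI[of _ "[]"] exI[of _ "[(h, [])]"]) auto
  qed
  ultimately show ?thesis unfolding generated_def using T_subgroup[OF sg gF] by blast
qed

fun nrm :: "(letter list \<times> letter list) list \<Rightarrow> bool" where
  "nrm [] = True"
| "nrm (bc # ps) = (fst bc \<noteq> [] \<and> (ps \<noteq> [] \<longrightarrow> snd bc \<noteq> []) \<and> nrm ps)"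

lemma red_trivial_mid:
  assumes "red e = []"
  shows "red (a @ g @ e @ finv g @ Wd g c ps) = red (Wd g (red (a @ c)) ps)"
proof -
  have "red (a @ g @ e @ finv g @ Wd g c ps) = red (a @ g @ red e @ finv g @ Wd g c ps)"
    using red_mid[of "a @ g" e "finv g @ Wd g c ps"] by simp
  also have "\<dots> = red (a @ red (g @ finv g @ Wd g c ps))" using assms by (simp add: red_app4)
  also have "\<dots> = red (a @ Wd g c ps)" by (simp add: red_cancel2 red_app4)
  also have "\<dots> = red (Wd g (red (a @ c)) ps)" by (simp add: Wd_def red_append_left)
  finally show ?thesis .
qed

lemma normalize:
  assumes sg: "is_subgroup d H"
  shows "inHs H a ps \<Longrightarrow> \<exists>a' ps'. inHs H a' ps' \<and> nrm ps' \<and> red (Wd g a ps) = red (Wd g a' ps')"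
proof (induction ps arbitrary: a)
  case Nil then show ?case by (intro exI[of _ a] exI[of _ "[]"]) auto
next
  case (Cons bc ps0)
  obtain b c where bc: "bc = (b, c)" by (cases bc)
  have ha: "a \<in> H" "b \<in> H" and hc: "inHs H c ps0" using Cons.prems bc by auto
  obtain c' ps'' where IH: "inHs H c' ps''" "nrm ps''" "red (Wd g c ps0) = red (Wd g c' ps'')"
    using Cons.IH[OF hc] by blast
  have e1: "red (Wd g a (bc # ps0)) = red (a @ g @ b @ finv g @ Wd g c' ps'')"
  proof -
    have "red (Wd g a (bc # ps0)) = red ((a @ g @ b @ finv g) @ red (Wd g c ps0))"
      by (simp only: red_app4) (simp add: bc Wd_Cons)
    also have "\<dots> = red (a @ g @ b @ finv g @ Wd g c' ps'')" by (simp only: IH(3) red_app4) simp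
    finally show ?thesis .
  qed
  have c'H: "c' \<in> H" using IH(1) by (cases ps'') (auto simp: inHs_def)
  show ?case
  proof (cases "b = []")
    case True
    then have "red (Wd g a (bc # ps0)) = red (Wd g (red (a @ c')) ps'')"
      using e1 red_trivial_mid[of b a g c' ps''] by simp
    moreover have "inHs H (red (a @ c')) ps''" using IH(1) sub_mult[OF sg ha(1) c'H] by (auto simp: inHs_def)
    ultimately show ?thesis using IH(2) by blast
  next
    case bn: False
    show ?thesis
    proof (cases "c' \<noteq> [] \<or> ps'' = []")
      case True
      then show ?thesis using e1 bn IH ha by (intro exI[of _ a] exI[of _ "(b, c') # ps''"]) (auto simp: Wd_Cons)
    next
      case False
      then obtain b2 c2 ps3 where ps: "ps'' = (b2, c2) # ps3" and c'0: "c' = []"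
        by (cases ps'') auto
      have h3: "b2 \<in> H" "inHs H c2 ps3" using IH(1) ps by auto
      have n3: "nrm ps3" "ps3 \<noteq> [] \<Longrightarrow> c2 \<noteq> []" using IH(2) ps by auto
      have e2: "red (Wd g a (bc # ps0)) = red (a @ g @ red (b @ b2) @ finv g @ Wd g c2 ps3)"
      proof -
        have "red (Wd g a (bc # ps0)) = red ((a @ g @ b) @ finv g @ g @ (b2 @ finv g @ Wd g c2 ps3))"
          using e1 ps c'0 by (simp add: Wd_Cons)
        also have "\<dots> = red ((a @ g @ b) @ red (finv g @ g @ (b2 @ finv g @ Wd g c2 ps3)))"
          by (simp only: red_app4)
        also have "\<dots> = red ((a @ g @ b) @ (b2 @ finv g @ Wd g c2 ps3))"
          by (simp only: red_cancel red_app4)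
        also have "\<dots> = red ((a @ g) @ (b @ b2) @ (finv g @ Wd g c2 ps3))" by simp
        also have "\<dots> = red ((a @ g) @ red (b @ b2) @ (finv g @ Wd g c2 ps3))" by (rule red_mid)
        finally show ?thesis by simp
      qed
      have bbH: "red (b @ b2) \<in> H" using sub_mult[OF sg ha(2) h3(1)] .
      show ?thesis
      proof (cases "red (b @ b2) = []")
        case True
        have "red (Wd g a (bc # ps0)) = red (Wd g (red (a @ c2)) ps3)"
          using e2 red_trivial_mid[of "red (b @ b2)" a g c2 ps3] True by simp
        moreover have "inHs H (red (a @ c2)) ps3"
          using h3 sub_mult[OF sg ha(1)] by (cases ps3) (auto simp: inHs_def)
        ultimately show ?thesis using n3(1) by blast
      next
        case False
        have "red (Wd g a (bc # ps0)) = red (Wd g a ((red (b @ b2), c2) # ps3))"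
          using e2 by (simp add: Wd_Cons)
        moreover have "inHs H a ((red (b @ b2), c2) # ps3)" using ha bbH h3 by simp
        moreover have "nrm ((red (b @ b2), c2) # ps3)" using False n3 by simp
        ultimately show ?thesis by blast
      qed
    qed
  qed
qed

lemma finv_take_finv: "finv (take l (finv g)) = drop (length g - l) g"
  by (simp add: finv_def take_rev drop_map rev_map[symmetric] comp_def)

lemma k2_eq: "k2 H g = k1 H (finv g)"
  by (simp add: k1_def k2_def)

lemma assemble_red:
  assumes "reduced A" "reduced B" "reduced C" "reduced j" "j \<noteq> []" "B \<noteq> []"
    "A \<noteq> [] \<Longrightarrow> last A \<noteq> inv_letter (hd j)" "hd B \<noteq> inv_letter (last j)" "last B \<noteq> last j"
    "C \<noteq> [] \<Longrightarrow> hd C \<noteq> hd j"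
  shows "reduced (A @ j @ B @ finv j @ C)"
  using assms by (auto simp: reduced_append hd_finv last_finv)

lemma red5: "red (A @ j @ B @ k @ C) = red (red A @ j @ red B @ k @ red C)"
proof -
  have "red (A @ j @ B @ k @ C) = red (red A @ j @ B @ k @ C)" by (rule red_append_left[symmetric])
  also have "\<dots> = red ((red A @ j) @ B @ (k @ C))" by simp
  also have "\<dots> = red ((red A @ j) @ red B @ (k @ C))" by (rule red_mid)
  also have "\<dots> = red ((red A @ j @ red B @ k) @ C)" by simp
  also have "\<dots> = red ((red A @ j @ red B @ k) @ red C)" by (rule red_append_right)
  finally show ?thesis by simp
qed

definition sig :: "letter list \<Rightarrow> (letter list \<times> letter list) list \<Rightarrow> nat" where
  "sig a ps = length a + sum_list (map (\<lambda>(b, c). length b + length c) ps)"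

lemma sig_Nil[simp]: "sig a [] = length a" by (simp add: sig_def)
lemma sig_Cons: "sig a ((b, c) # ps) = length a + length b + sig c ps" by (simp add: sig_def)

lemma gen_finv: "G = P @ J @ finv Q \<Longrightarrow> finv G = Q @ finv J @ finv P"
  by simp

lemma gen_nth: "G = P @ J @ R \<Longrightarrow> J \<noteq> [] \<Longrightarrow> G ! length P = hd J"
  by (simp add: nth_append hd_conv_nth)

lemma gen_split1: "G = P @ J @ finv Q \<Longrightarrow> finv G = Q @ finv J @ finv P \<Longrightarrow>
  finv P @ a @ G @ b @ finv G @ W = (finv P @ a @ P) @ J @ (finv Q @ b @ Q) @ finv J @ (finv P @ W)"
  by simp

lemma gen_split2: "G = P @ J @ finv Q \<Longrightarrow> finv G = Q @ finv J @ finv P \<Longrightarrow>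
  a @ G @ b @ finv G @ W = (a @ P) @ J @ (finv Q @ b @ Q) @ finv J @ (finv P @ W)"
  by simp

lemma arith1:
  fixes la lb A0 A1 V Z k1 k2 J n s :: nat
  assumes "la \<le> A0 + 2 * k1" "lb \<le> A1 + 2 * k2" "2 * n * J \<le> V"
    "s + 2 * n * J \<le> V + k1 + 2 * n * (k1 + k2)" "Z = A0 + J + A1 + J + V"
  shows "2 * Suc n * J \<le> Z \<and> la + lb + s + 2 * Suc n * J \<le> Z + k1 + 2 * Suc n * (k1 + k2)"
  using assms by (simp add: distrib_left distrib_right)

lemma arith2:
  fixes la lb A0 A1 V Z k1 k2 J n s :: nat
  assumes "la \<le> A0 + k1" "lb \<le> A1 + 2 * k2" "2 * n * J \<le> V"
    "s + 2 * n * J \<le> V + k1 + 2 * n * (k1 + k2)" "Z = A0 + J + A1 + J + V"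
  shows "2 * Suc n * J \<le> Z \<and> la + lb + s + 2 * Suc n * J \<le> Z + 2 * Suc n * (k1 + k2)"
  using assms by (simp add: distrib_left distrib_right)

context
  fixes d :: nat and H :: "letter list set" and g :: "letter list"
  assumes sg: "is_subgroup d H" and rg: "reduced g" and adm: "k1 H g + k2 H g < length g"
begin

abbreviation "pp \<equiv> take (k1 H g) g"
abbreviation "qq \<equiv> take (k2 H g) (finv g)"
abbreviation "jj \<equiv> drop (k1 H g) (take (length g - k2 H g) g)"

lemma lt1: "k1 H g < length g" using adm by simp
lemma lt2: "k1 H (finv g) < length (finv g)" using adm by (simp add: k2_eq)

lemma F1: "g = pp @ jj @ finv qq"
proof -
  have "k1 H g \<le> length g - k2 H g" using adm by simp
  then have "pp @ jj = take (length g - k2 H g) g"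
    by (metis append_take_drop_id min_def take_take)
  then have "g = (pp @ jj) @ drop (length g - k2 H g) g" by simp
  then show ?thesis by (simp add: finv_take_finv)
qed

lemma F2: "length jj = length g - k1 H g - k2 H g" "jj \<noteq> []"
  using adm by auto

lemma lpp: "length pp = k1 H g" using lt1 by simp
lemma lqq: "length qq = k2 H g" using adm by simp

lemma F1': "finv g = qq @ finv jj @ finv pp"
  by (rule gen_finv[OF F1])

lemma F3: "hd jj = g ! k1 H g"
  using gen_nth[OF F1 F2(2)] lpp by simp

lemma F4: "finv g ! k1 H (finv g) = inv_letter (last jj)"
proof -
  have "finv jj \<noteq> []" using F2(2) by simp
  from gen_nth[OF F1' this] lqq show ?thesis using F2(2) by (simp add: hd_finv k2_eq)
qed

lemma F5: "take (k1 H (finv g)) (finv g) = qq" by (simp add: k2_eq)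

lemma F6: "reduced jj" using rg by (simp add: reduced_take reduced_drop)

lemma rfg: "reduced (finv g)" using rg by simp

lemma Vclaim:
  "inHs H a ps \<Longrightarrow> nrm ps \<Longrightarrow> (a \<noteq> [] \<or> ps = []) \<Longrightarrow>
   (red (finv pp @ Wd g a ps) \<noteq> [] \<longrightarrow> hd (red (finv pp @ Wd g a ps)) \<noteq> g ! k1 H g) \<and>
   2 * length ps * length jj \<le> length (red (finv pp @ Wd g a ps)) \<and>
   sig a ps + 2 * length ps * length jj \<le> length (red (finv pp @ Wd g a ps)) + k1 H g + 2 * length ps * (k1 H g + k2 H g)"
proof (induction ps arbitrary: a)
  case Nil
  then have aH: "a \<in> H" by simp
  show ?case using factB2[OF sg rg lt1 aH] left_len[OF sg aH, of pp] lpp by simp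
next
  case (Cons bc ps0)
  obtain b c where bc: "bc = (b, c)" by (cases bc)
  have aH: "a \<in> H" and bH: "b \<in> H" and hc: "inHs H c ps0" using Cons.prems bc by auto
  have an: "a \<noteq> []" and bn: "b \<noteq> []" and cn: "c \<noteq> [] \<or> ps0 = []" and n0: "nrm ps0"
    using Cons.prems bc by auto
  note IH = Cons.IH[OF hc n0 cn]
  define A0 where "A0 = red (finv pp @ a @ pp)"
  define A1 where "A1 = red (finv qq @ b @ qq)"
  define V where "V = red (finv pp @ Wd g c ps0)"
  have dec: "finv pp @ Wd g a (bc # ps0) = (finv pp @ a @ pp) @ jj @ (finv qq @ b @ qq) @ finv jj @ (finv pp @ Wd g c ps0)"
    unfolding bc Wd_Cons by (rule gen_split1[OF F1 F1'])
  have e: "red (finv pp @ Wd g a (bc # ps0)) = red (A0 @ jj @ A1 @ finv jj @ V)"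
    unfolding A0_def A1_def V_def dec by (rule red5)
  have A0n: "A0 \<noteq> []" using conj_ne[OF sg aH an] by (simp add: A0_def)
  have A0h: "hd A0 \<noteq> g ! k1 H g" using factA[OF sg rg lt1 aH] A0n by (simp add: A0_def)
  have A0l: "last A0 \<noteq> inv_letter (g ! k1 H g)" using factA2[OF sg rg lt1 aH] A0n by (simp add: A0_def)
  have A1n: "A1 \<noteq> []" using conj_ne[OF sg bH bn] by (simp add: A1_def)
  have A1h: "hd A1 \<noteq> inv_letter (last jj)" using factA[OF sg rfg lt2 bH] A1n F4 F5 by (simp add: A1_def)
  have A1l: "last A1 \<noteq> last jj" using factA2[OF sg rfg lt2 bH] A1n F4 F5 by (simp add: A1_def)
  have red_all: "reduced (A0 @ jj @ A1 @ finv jj @ V)"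
    using assemble_red[of A0 A1 V jj] reduced_red F6 F2(2) A1n A0l A1h A1l IH F3
    by (simp add: A0_def A1_def V_def)
  then have Z: "red (finv pp @ Wd g a (bc # ps0)) = A0 @ jj @ A1 @ finv jj @ V"
    using e by (simp add: red_reduced)
  have la: "length a \<le> length A0 + 2 * k1 H g" using conj_len[OF sg aH, of pp] lpp by (simp add: A0_def)
  have lb: "length b \<le> length A1 + 2 * k2 H g" using conj_len[OF sg bH, of qq] lqq by (simp add: A1_def)
  have IH2: "2 * length ps0 * length jj \<le> length V"
    "sig c ps0 + 2 * length ps0 * length jj \<le> length V + k1 H g + 2 * length ps0 * (k1 H g + k2 H g)"
    using IH by (simp_all add: V_def)
  have LZ: "length (red (finv pp @ Wd g a (bc # ps0))) = length A0 + length jj + length A1 + length jj + length V"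
    by (simp only: Z length_append length_finv add.assoc)
  have ar: "2 * Suc (length ps0) * length jj \<le> length (red (finv pp @ Wd g a (bc # ps0))) \<and>
    length a + length b + sig c ps0 + 2 * Suc (length ps0) * length jj \<le> length (red (finv pp @ Wd g a (bc # ps0))) + k1 H g + 2 * Suc (length ps0) * (k1 H g + k2 H g)"
    by (rule arith1[OF la lb IH2 LZ])
  have hz: "red (finv pp @ Wd g a (bc # ps0)) \<noteq> [] \<longrightarrow> hd (red (finv pp @ Wd g a (bc # ps0))) \<noteq> g ! k1 H g"
    using Z A0n A0h by simp
  show ?case using ar hz bc by (simp only: length_Cons sig_Cons)
qed

lemma Top:
  assumes "inHs H a ps" "nrm ps"
  shows "2 * length ps * length jj \<le> length (red (Wd g a ps)) \<and>
   sig a ps + 2 * length ps * length jj \<le> length (red (Wd g a ps)) + 2 * length ps * (k1 H g + k2 H g)"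
proof (cases ps)
  case Nil
  then show ?thesis using assms sub_red[OF sg] by simp
next
  case (Cons bc ps0)
  obtain b c where bc: "bc = (b, c)" by (cases bc)
  have aH: "a \<in> H" and bH: "b \<in> H" and hc: "inHs H c ps0" using assms Cons bc by auto
  have bn: "b \<noteq> []" and cn: "c \<noteq> [] \<or> ps0 = []" and n0: "nrm ps0"
    using assms Cons bc by auto
  note IH = Vclaim[OF hc n0 cn]
  define B0 where "B0 = red (a @ pp)"
  define A1 where "A1 = red (finv qq @ b @ qq)"
  define V where "V = red (finv pp @ Wd g c ps0)"
  have dec: "Wd g a (bc # ps0) = (a @ pp) @ jj @ (finv qq @ b @ qq) @ finv jj @ (finv pp @ Wd g c ps0)"
    unfolding bc Wd_Cons by (rule gen_split2[OF F1 F1'])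
  have e: "red (Wd g a (bc # ps0)) = red (B0 @ jj @ A1 @ finv jj @ V)"
    unfolding B0_def A1_def V_def dec by (rule red5)
  have B0l: "B0 \<noteq> [] \<Longrightarrow> last B0 \<noteq> inv_letter (g ! k1 H g)" using factB[OF sg rg lt1 aH] by (simp add: B0_def)
  have A1n: "A1 \<noteq> []" using conj_ne[OF sg bH bn] by (simp add: A1_def)
  have A1h: "hd A1 \<noteq> inv_letter (last jj)" using factA[OF sg rfg lt2 bH] A1n F4 F5 by (simp add: A1_def)
  have A1l: "last A1 \<noteq> last jj" using factA2[OF sg rfg lt2 bH] A1n F4 F5 by (simp add: A1_def)
  have red_all: "reduced (B0 @ jj @ A1 @ finv jj @ V)"
    using assemble_red[of B0 A1 V jj] reduced_red F6 F2(2) A1n B0l A1h A1l IH F3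
    by (simp add: B0_def A1_def V_def)
  then have Z: "red (Wd g a (bc # ps0)) = B0 @ jj @ A1 @ finv jj @ V"
    using e by (simp add: red_reduced)
  have la: "length a \<le> length B0 + k1 H g" using right_len[OF sg aH, of pp] lpp by (simp add: B0_def)
  have lb: "length b \<le> length A1 + 2 * k2 H g" using conj_len[OF sg bH, of qq] lqq by (simp add: A1_def)
  have IH2: "2 * length ps0 * length jj \<le> length V"
    "sig c ps0 + 2 * length ps0 * length jj \<le> length V + k1 H g + 2 * length ps0 * (k1 H g + k2 H g)"
    using IH by (simp_all add: V_def)
  have LZ: "length (red (Wd g a (bc # ps0))) = length B0 + length jj + length A1 + length jj + length V"
    by (simp only: Z length_append length_finv add.assoc)
  have ar: "2 * Suc (length ps0) * length jj \<le> length (red (Wd g a (bc # ps0))) \<and>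
    length a + length b + sig c ps0 + 2 * Suc (length ps0) * length jj \<le> length (red (Wd g a (bc # ps0))) + 2 * Suc (length ps0) * (k1 H g + k2 H g)"
    by (rule arith2[OF la lb IH2 LZ])
  show ?thesis using ar bc Cons by (simp only: length_Cons sig_Cons)
qed

end

lemma fin_ball: "is_subgroup d H \<Longrightarrow> finite {h\<in>H. length h \<le> k}"
proof -
  assume sg: "is_subgroup d H"
  have "{h\<in>H. length h \<le> k} \<subseteq> {xs. set xs \<subseteq> ({..<d} \<times> UNIV) \<and> length xs \<le> k}"
  proof
    fix h assume h: "h \<in> {h\<in>H. length h \<le> k}"
    then have "h \<in> free_group d" using sg by (auto simp: is_subgroup_def)
    then have "\<forall>x\<in>set h. fst x < d" by (simp add: free_group_def)
    then show "h \<in> {xs. set xs \<subseteq> ({..<d} \<times> UNIV) \<and> length xs \<le> k}" using h by (auto simp: mem_Times_iff)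
  qed
  moreover have "finite {xs. set xs \<subseteq> ({..<d} \<times> (UNIV :: bool set)) \<and> length xs \<le> k}"
    by (rule finite_lists_length_le) simp
  ultimately show ?thesis by (rule finite_subset)
qed

definition Zs :: "letter list set \<Rightarrow> nat list \<Rightarrow> letter list list set" where
  "Zs H \<alpha> = {l. list_all2 (\<lambda>\<gamma> k. \<gamma> \<in> H \<and> length \<gamma> \<le> k) l \<alpha>}"

lemma Zs_card:
  assumes fin: "\<And>k. finite {h\<in>H. length h \<le> k}"
  shows "finite (Zs H \<alpha>) \<and> card (Zs H \<alpha>) = prod_list (map (growth H) \<alpha>)"
proof (induction \<alpha>)
  case Nil
  have "Zs H [] = {[]}" by (auto simp: Zs_def)
  then show ?case by simp
next
  case (Cons k \<alpha>)
  have e: "Zs H (k # \<alpha>) = (\<lambda>(x, l). x # l) ` ({h\<in>H. length h \<le> k} \<times> Zs H \<alpha>)"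
    by (auto simp: Zs_def list_all2_Cons2)
  have inj: "inj_on (\<lambda>(x, l). x # l) ({h\<in>H. length h \<le> k} \<times> Zs H \<alpha>)"
    by (auto simp: inj_on_def)
  have "card (Zs H (k # \<alpha>)) = card {h\<in>H. length h \<le> k} * card (Zs H \<alpha>)"
    by (simp only: e card_image[OF inj] card_cartesian_product)
  then show ?case using Cons fin[of k] e by (simp add: growth_def)
qed

definition flat :: "(letter list \<times> letter list) list \<Rightarrow> letter list list" where
  "flat ps = concat (map (\<lambda>(b, c). [b, c]) ps)"

fun prs :: "letter list list \<Rightarrow> (letter list \<times> letter list) list" where
  "prs (b # c # r) = (b, c) # prs r"
| "prs _ = []"

lemma prs_flat: "prs (flat ps) = ps"
  by (induction ps) (auto simp: flat_def)

lemma length_flat: "length (flat ps) = 2 * length ps"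
  by (induction ps) (auto simp: flat_def)

lemma sig_flat: "sig a ps = length a + sum_list (map length (flat ps))"
  by (induction ps) (auto simp: flat_def sig_def)

lemma set_flat: "inHs H a ps \<Longrightarrow> \<forall>x\<in>set (flat ps). x \<in> H"
  by (auto simp: flat_def inHs_def)

theorem lemma2p10:
  fixes d :: nat and \<Gamma> :: "letter list set" and g :: "letter list" and R :: nat
  assumes "is_subgroup d \<Gamma>" and "fin_gen_subgroup d \<Gamma>"
    and "g \<in> free_group d"
    and "admissible_connector \<Gamma> g"
  shows "growth (generated d (\<Gamma> \<union> {fmult (fmult g h) (finv g) | h. h \<in> \<Gamma>})) R
    \<le> (\<Sum>i = 0..R div (2 * join_length \<Gamma> g).
         \<Sum>\<alpha>\<in>{\<alpha> :: nat list. length \<alpha> = 2 * i + 1 \<and>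
               int (sum_list \<alpha>) = int R + 2 * int i * (int (length g) - 2 * int (join_length \<Gamma> g))}.
           prod_list (map (growth \<Gamma>) \<alpha>))"
proof -
  note sg = assms(1)
  note gF = assms(3)
  have rg: "reduced g" using gF by (simp add: free_group_def)
  have adm: "k1 \<Gamma> g + k2 \<Gamma> g < length g" using assms(4) by (simp add: admissible_connector_def)
  define J where "J = join_length \<Gamma> g"
  define K where "K = k1 \<Gamma> g + k2 \<Gamma> g"
  have JK: "length g = K + J" "J > 0" using adm by (auto simp: J_def K_def join_length_def)
  have Jjj: "length (drop (k1 \<Gamma> g) (take (length g - k2 \<Gamma> g) g)) = J"
    using adm by (simp add: J_def join_length_def)
  define M where "M i = int R + 2 * int i * (int (length g) - 2 * int J)" for i
  define A where "A i = {\<alpha> :: nat list. length \<alpha> = 2 * i + 1 \<and> int (sum_list \<alpha>) = M i}" for i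
  define F where "F l = red (Wd g (hd l) (prs (tl l)))" for l
  define U where "U = (\<Union>i\<in>{0..R div (2 * J)}. \<Union>\<alpha>\<in>A i. F ` Zs \<Gamma> \<alpha>)"
  have finH: "\<And>k. finite {h\<in>\<Gamma>. length h \<le> k}" using fin_ball[OF sg] .
  have finA: "finite (A i)" for i
  proof -
    have "A i \<subseteq> {\<alpha>. set \<alpha> \<subseteq> {..nat (M i)} \<and> length \<alpha> = 2 * i + 1}"
    proof
      fix \<alpha> assume "\<alpha> \<in> A i"
      then have "length \<alpha> = 2 * i + 1" "sum_list \<alpha> = nat (M i)" by (auto simp: A_def)
      then show "\<alpha> \<in> {\<alpha>. set \<alpha> \<subseteq> {..nat (M i)} \<and> length \<alpha> = 2 * i + 1}"
        using member_le_sum_list[of _ \<alpha>] by auto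
    qed
    moreover have "finite {\<alpha>. set \<alpha> \<subseteq> {..nat (M i)} \<and> length \<alpha> = 2 * i + 1}"
      by (rule finite_lists_length_eq) simp
    ultimately show ?thesis by (rule finite_subset)
  qed
  have finZ: "finite (Zs \<Gamma> \<alpha>)" for \<alpha> using Zs_card[OF finH] by blast
  have finU: "finite U" unfolding U_def using finA finZ by auto
  have sub: "{h \<in> generated d (\<Gamma> \<union> {fmult (fmult g h) (finv g) | h. h \<in> \<Gamma>}). length h \<le> R} \<subseteq> U"
  proof
    fix h assume "h \<in> {h \<in> generated d (\<Gamma> \<union> {fmult (fmult g h) (finv g) | h. h \<in> \<Gamma>}). length h \<le> R}"
    then have hT: "h \<in> Tset \<Gamma> g" and hR: "length h \<le> R" using gen_sub_T[OF sg gF] by auto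
    then obtain a ps where "inHs \<Gamma> a ps" "h = red (Wd g a ps)" by (auto simp: Tset_def)
    then obtain a' ps' where n: "inHs \<Gamma> a' ps'" "nrm ps'" "h = red (Wd g a' ps')"
      using normalize[OF sg] by metis
    define n where "n = length ps'"
    have T: "2 * n * J \<le> length h" "sig a' ps' + 2 * n * J \<le> length h + 2 * n * K"
      using Top[OF sg rg adm n(1,2)] n(3) Jjj by (simp_all add: n_def K_def)
    have e2: "n * (2 * J) = 2 * n * J" by simp
    have "n * (2 * J) \<le> R" using T(1) hR e2 by linarith
    then have nR: "n \<le> R div (2 * J)" using less_eq_div_iff_mult_less_eq[of "2*J" n R] JK(2) by simp
    have Mn: "M n = int R + 2 * int n * int K - 2 * int n * int J"
      using JK(1) by (simp add: M_def algebra_simps)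
    have s1: "sig a' ps' + 2 * n * J \<le> R + 2 * n * K" using T(2) hR by linarith
    then have "int (sig a' ps' + 2 * n * J) \<le> int (R + 2 * n * K)" by (simp only: of_nat_le_iff)
    then have "int (sig a' ps') + 2 * int n * int J \<le> int R + 2 * int n * int K" by simp
    then have sM: "int (sig a' ps') \<le> M n" using Mn by linarith
    define sl where "sl = nat (M n) - sig a' ps'"
    define \<alpha> where "\<alpha> = (length a' + sl) # map length (flat ps')"
    have aA: "\<alpha> \<in> A n"
    proof -
      have "sum_list \<alpha> = sig a' ps' + sl" by (simp add: \<alpha>_def sig_flat)
      also have "\<dots> = nat (M n)" using sM by (simp add: sl_def)
      finally have "int (sum_list \<alpha>) = M n" using sM by simp
      then show ?thesis by (simp add: A_def \<alpha>_def length_flat n_def)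
    qed
    have lZ: "a' # flat ps' \<in> Zs \<Gamma> \<alpha>"
      using n(1) set_flat[OF n(1)]
      by (auto simp: inHs_def Zs_def \<alpha>_def list_all2_map2 list_all2_same)
    have Fh: "h = F (a' # flat ps')" by (simp add: F_def prs_flat n(3))
    have hF: "h \<in> F ` Zs \<Gamma> \<alpha>" using lZ Fh by (rule rev_image_eqI)
    then have "h \<in> (\<Union>\<alpha>\<in>A n. F ` Zs \<Gamma> \<alpha>)" using aA by blast
    moreover have "n \<in> {0..R div (2 * J)}" using nR by simp
    ultimately show "h \<in> U" unfolding U_def by blast
  qed
  have "growth (generated d (\<Gamma> \<union> {fmult (fmult g h) (finv g) | h. h \<in> \<Gamma>})) R \<le> card U"
    unfolding growth_def using card_mono[OF finU sub] .
  also have "\<dots> \<le> (\<Sum>i = 0..R div (2 * J). card (\<Union>\<alpha>\<in>A i. F ` Zs \<Gamma> \<alpha>))"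
    unfolding U_def by (rule card_UN_le) simp
  also have "\<dots> \<le> (\<Sum>i = 0..R div (2 * J). \<Sum>\<alpha>\<in>A i. card (F ` Zs \<Gamma> \<alpha>))"
    by (rule sum_mono) (rule card_UN_le[OF finA])
  also have "\<dots> \<le> (\<Sum>i = 0..R div (2 * J). \<Sum>\<alpha>\<in>A i. card (Zs \<Gamma> \<alpha>))"
    by (intro sum_mono card_image_le finZ)
  also have "\<dots> = (\<Sum>i = 0..R div (2 * J). \<Sum>\<alpha>\<in>A i. prod_list (map (growth \<Gamma>) \<alpha>))"
    using Zs_card[OF finH] by simp
  finally show ?thesis by (simp add: A_def M_def J_def)
qed

end
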